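(* Let $T=(F_0,F_1)$ be a template of order $10$ and type $(4,4,4,4)$, and let $N$ be a $4$-net of order $10$ that is a refinement of $T$. Then: (i) the four points of $T$ of weight $4$ (type $1111$) lie in pairwise distinct rows and pairwise distinct columns; (ii) each row of $Q_2$ and each column of $Q_3$ contains exactly three cells of type ${*}{*}10$ and three cells of type ${*}{*}01$; (iii) each relational line of $N$ in $\Pi_2\cup\Pi_3$ contains exactly one point of $Q_1$ and exactly three points in each of $Q_2$, $Q_3$ and $Q_4$; (iv) each column of $Q_2$ and each row of $Q_3$ contains exactly two cells of type ${*}{*}01$ and two of type ${*}{*}10$; and each row and each column of $Q_4$ contains exactly two cells of type $0011$ and four cells of type $0000$. Here ${*}$ denotes an arbitrary bit.
   Context: A $k$-net of order $n$: a set of $n^2$ points and $kn$ lines (subsets of size $n$), each point on $k$ lines, lines partitioned into $k$ parallel classes $\Pi_0,\dots,\Pi_{k-1}$ of $n$ pairwise disjoint lines, lines from different classes meeting in exactly one point. A binary frequency square of order $n$ with frequencies $(n-\lambda,\lambda)$ is an $n\times n$ array over $\{0,1\}$ with exactly $\lambda$ ones in each row and each column; two such squares with frequencies $(n-\lambda,\lambda)$, $(n-\mu,\mu)$ are orthogonal if each pair $(a,b)\in\{0,1\}^2$ occurs in exactly $f_a f'_b$ cells, where $f_0=n-\lambda,f_1=\lambda,f'_0=n-\mu,f'_1=\mu$. For $n$ even and even $\lambda_0,\dots,\lambda_{k-1}$, a template of order $n$ and type $(\lambda_0,\dots,\lambda_{k-1})$ is a list $(F_0,\dots,F_{k-3})$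 of mutually orthogonal binary frequency squares of order $n$, $F_{t-2}$ having frequencies $(n-\lambda_t,\lambda_t)$, where rows $0,\dots,\lambda_0-1$ and columns $0,\dots,\lambda_1-1$ are called relational; the type of cell $(i,j)$ is the string $(x,y,F_0[i,j],\dots,F_{k-3}[i,j])$ with $x=1$ iff row $i$ is relational and $y=1$ iff column $j$ is relational; its weight is the number of ones in its type, and it is required that every cell has weight $\equiv\frac12\sum_i\lambda_i\pmod 2$. A $k$-net $N$ with parallel classes $\Pi_0,\dots,\Pi_{k-1}$ is a refinement of $T$ if the lines of $\Pi_0$ and $\Pi_1$ can be labelled $0,\dots,n-1$ (rows and columns) so that, identifying each point with the cell (row label, column label), for each $t\ge2$ every line of $\Pi_t$ consists of cells on which $F_{t-2}$ is constant; a line of $\Pi_t$ ($t\ge 2$) is relational if $F_{t-2}$ equals $1$ on it, and relational rows/columns are the lines of $\Pi_0,\Pi_1$ labelled by relational rows/columns. For order $10$ and type $(4,4,4,4)$ the quadrants are: $Q_1$ = rows $0$–$3$ × columns $0$–$3$; $Q_2$ = rows $0$–$3$ × columns $4$–$9$; $Q_3$ = rows $4$–$9$ × columns $0$–$3$; $Q_4$ = rows $4$–$9$ × columns $4$–$9$. A "row of $Q_2$" means the 6 cells of one relational row in $Q_2$, a "column of $Q_2$" the 4 cells of one non-relational column in $Q_2$, and similarly for the other quadrants. *)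

theory Defs
  imports Main
begin

definition is_net :: "nat \<Rightarrow> nat \<Rightarrow> 'p set \<Rightarrow> (nat \<Rightarrow> 'p set set) \<Rightarrow> bool" where
  "is_net k n P Pi \<longleftrightarrow>
     finite P \<and> card P = n^2 \<and>
     (\<forall>t<k. card (Pi t) = n \<and> (\<forall>L\<in>Pi t. L \<subseteq> P \<and> card L = n) \<and>
            (\<forall>L\<in>Pi t. \<forall>M\<in>Pi t. L \<noteq> M \<longrightarrow> L \<inter> M = {})) \<and>
     (\<forall>t<k. \<forall>u<k. t \<noteq> u \<longrightarrow> Pi t \<inter> Pi u = {}) \<and>
     (\<forall>t<k. \<forall>u<k. t \<noteq> u \<longrightarrow> (\<forall>L\<in>Pi t. \<forall>M\<in>Pi u. card (L \<inter> M) = 1)) \<and>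
     (\<forall>p\<in>P. \<forall>t<k. \<exists>!L. L \<in> Pi t \<and> p \<in> L)"

definition freq_square :: "nat \<Rightarrow> nat \<Rightarrow> (nat \<Rightarrow> nat \<Rightarrow> nat) \<Rightarrow> bool" where
  "freq_square n lam F \<longleftrightarrow>
     (\<forall>i<n. \<forall>j<n. F i j \<in> {0, 1}) \<and>
     (\<forall>i<n. card {j. j < n \<and> F i j = 1} = lam) \<and>
     (\<forall>j<n. card {i. i < n \<and> F i j = 1} = lam)"

definition freq :: "nat \<Rightarrow> nat \<Rightarrow> nat \<Rightarrow> nat" where
  "freq n lam a = (if a = 1 then lam else n - lam)"

definition orthogonal_fs :: "nat \<Rightarrow> nat \<Rightarrow> nat \<Rightarrow> (nat \<Rightarrow> nat \<Rightarrow> nat) \<Rightarrow> (nat \<Rightarrow> nat \<Rightarrow> nat) \<Rightarrow> bool" where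
  "orthogonal_fs n lam mu F G \<longleftrightarrow>
     (\<forall>a\<in>{0,1}. \<forall>b\<in>{0,1}.
        card {(i, j). i < n \<and> j < n \<and> F i j = a \<and> G i j = b} = freq n lam a * freq n mu b)"

(* type of cell (i,j): (x, y, F_0[i,j], ..., F_{k-3}[i,j]) *)
definition cell_type :: "nat list \<Rightarrow> (nat \<Rightarrow> nat \<Rightarrow> nat) list \<Rightarrow> nat \<Rightarrow> nat \<Rightarrow> nat list" where
  "cell_type lams Fs i j =
     [if i < lams ! 0 then 1 else 0, if j < lams ! 1 then 1 else 0] @ map (\<lambda>F. F i j) Fs"

definition cell_weight :: "nat list \<Rightarrow> (nat \<Rightarrow> nat \<Rightarrow> nat) list \<Rightarrow> nat \<Rightarrow> nat \<Rightarrow> nat" where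
  "cell_weight lams Fs i j = sum_list (cell_type lams Fs i j)"

definition template :: "nat \<Rightarrow> nat list \<Rightarrow> (nat \<Rightarrow> nat \<Rightarrow> nat) list \<Rightarrow> bool" where
  "template n lams Fs \<longleftrightarrow>
     even n \<and> 2 \<le> length lams \<and> (\<forall>l\<in>set lams. even l) \<and>
     length Fs + 2 = length lams \<and>
     (\<forall>t<length Fs. freq_square n (lams ! (t + 2)) (Fs ! t)) \<and>
     (\<forall>s<length Fs. \<forall>t<length Fs. s \<noteq> t \<longrightarrow>
        orthogonal_fs n (lams ! (s + 2)) (lams ! (t + 2)) (Fs ! s) (Fs ! t)) \<and>
     (\<forall>i<n. \<forall>j<n. cell_weight lams Fs i j mod 2 = (sum_list lams div 2) mod 2)"

definition cell_of :: "(nat \<Rightarrow> 'p set set) \<Rightarrow> ('p set \<Rightarrow> nat) \<Rightarrow> ('p set \<Rightarrow> nat) \<Rightarrow> 'p \<Rightarrow> nat \<times> nat" where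
  "cell_of Pi row col p = (row (THE L. L \<in> Pi 0 \<and> p \<in> L), col (THE L. L \<in> Pi 1 \<and> p \<in> L))"

definition refinement_via :: "nat \<Rightarrow> nat list \<Rightarrow> (nat \<Rightarrow> nat \<Rightarrow> nat) list \<Rightarrow> 'p set \<Rightarrow> (nat \<Rightarrow> 'p set set)
      \<Rightarrow> ('p set \<Rightarrow> nat) \<Rightarrow> ('p set \<Rightarrow> nat) \<Rightarrow> bool" where
  "refinement_via n lams Fs P Pi row col \<longleftrightarrow>
     bij_betw row (Pi 0) {..<n} \<and> bij_betw col (Pi 1) {..<n} \<and>
     (\<forall>t. 2 \<le> t \<and> t < length lams \<longrightarrow>
        (\<forall>L\<in>Pi t. \<forall>p\<in>L. \<forall>q\<in>L.
           case_prod (Fs ! (t - 2)) (cell_of Pi row col p) = case_prod (Fs ! (t - 2)) (cell_of Pi row col q)))"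

end

theory Submission
  imports Defs
begin


lemma card_bits:
  assumes "finite A" "\<forall>j\<in>A. f j \<le> (1::nat)"
  shows "card {j\<in>A. f j = 1} = sum f A"
proof -
  have "sum f A = sum (\<lambda>j. if f j = 1 then 1 else 0) A"
    using assms(2) by (intro sum.cong) (auto simp: le_Suc_eq)
  also have "\<dots> = sum (\<lambda>_. 1) {j\<in>A. f j = 1}"
    using assms(1) by (subst sum.inter_filter) auto
  finally show ?thesis by simp
qed

lemma card_split:
  assumes "finite L"
  shows "card {p\<in>L. A p} = card {p\<in>L. A p \<and> B p} + card {p\<in>L. A p \<and> \<not> B p}"
proof -
  have "{p\<in>L. A p} = {p\<in>L. A p \<and> B p} \<union> {p\<in>L. A p \<and> \<not> B p}" by auto
  moreover have "card ({p\<in>L. A p \<and> B p} \<union> {p\<in>L. A p \<and> \<not> B p}) = card {p\<in>L. A p \<and> B p} + card {p\<in>L. A p \<and> \<not> B p}"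
    by (rule card_Un_disjoint) (use assms in auto)
  ultimately show ?thesis by simp
qed

lemma bit_ne: "a \<le> 1 \<Longrightarrow> b \<le> 1 \<Longrightarrow> a \<noteq> b \<Longrightarrow> a + b = (1::nat)" by arith

lemma sums10:
  fixes f :: "nat \<Rightarrow> nat"
  shows "sum f {..<10} = sum f {..<4} + sum f {4..<10}"
  using sum.atLeastLessThan_concat[of 0 4 10 f] by (simp add: atLeast0LessThan)

lemma typeA:
  fixes f g :: "nat \<Rightarrow> nat"
  assumes bits: "\<forall>j<10. f j \<le> 1 \<and> g j \<le> 1"
    and cf: "card {j. j < 10 \<and> f j = 1} = 4" and cg: "card {j. j < 10 \<and> g j = 1} = 4"
    and p1: "\<forall>j<4. f j = g j" and p2: "\<forall>j. 4 \<le> j \<and> j < 10 \<longrightarrow> f j \<noteq> g j"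
  shows "card {j. 4 \<le> j \<and> j < 10 \<and> f j = 1 \<and> g j = 0} = 3 \<and>
         card {j. 4 \<le> j \<and> j < 10 \<and> f j = 0 \<and> g j = 1} = 3 \<and>
         card {j. j < 4 \<and> f j = 1 \<and> g j = 1} = 1"
proof -
  have sf: "sum f {..<10} = 4" using cf card_bits[of "{..<10}" f] bits by (simp add: Collect_conj_eq lessThan_def Int_commute)
  have sg: "sum g {..<10} = 4" using cg card_bits[of "{..<10}" g] bits by (simp add: Collect_conj_eq lessThan_def Int_commute)
  have e1: "sum g {..<4} = sum f {..<4}" using p1 by (intro sum.cong) auto
  have "sum (\<lambda>j. f j + g j) {4..<10} = sum (\<lambda>_. 1) {4..<10::nat}"
    proof (rule sum.cong[OF refl])
    fix x :: nat assume "x \<in> {4..<10}"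
    then have "f x \<le> 1" "g x \<le> 1" "f x \<noteq> g x" using p2 bits by auto
    then show "f x + g x = 1" by (rule bit_ne)
  qed
  then have e2: "sum f {4..<10} + sum g {4..<10} = 6" by (simp add: sum.distrib)
  have S2: "sum f {4..<10} = 3" and T2: "sum g {4..<10} = 3" and S1: "sum f {..<4} = 1"
    using sf sg e1 e2 sums10[of f] sums10[of g] by linarith+
  have "{j. 4 \<le> j \<and> j < 10 \<and> f j = 1 \<and> g j = 0} = {j\<in>{4..<10}. f j = 1}"
    using p2 bits by (auto simp: le_Suc_eq) (metis le_Suc_eq le_zero_eq)
  moreover have "{j. 4 \<le> j \<and> j < 10 \<and> f j = 0 \<and> g j = 1} = {j\<in>{4..<10}. g j = 1}"
    using p2 bits by (auto simp: le_Suc_eq) (metis le_Suc_eq le_zero_eq)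
  moreover have "{j. j < 4 \<and> f j = 1 \<and> g j = 1} = {j\<in>{..<4}. f j = 1}"
    using p1 by auto
  ultimately show ?thesis using S1 S2 T2 card_bits[of "{4..<10}" f] card_bits[of "{4..<10}" g]
      card_bits[of "{..<4}" f] bits by auto
qed

lemma typeB:
  fixes f g :: "nat \<Rightarrow> nat"
  assumes bits: "\<forall>j<10. f j \<le> 1 \<and> g j \<le> 1"
    and cf: "card {j. j < 10 \<and> f j = 1} = 4" and cg: "card {j. j < 10 \<and> g j = 1} = 4"
    and p1: "\<forall>j<4. f j \<noteq> g j" and p2: "\<forall>j. 4 \<le> j \<and> j < 10 \<longrightarrow> f j = g j"
  shows "card {j. j < 4 \<and> f j = 0 \<and> g j = 1} = 2 \<and>
         card {j. j < 4 \<and> f j = 1 \<and> g j = 0} = 2 \<and>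
         card {j. 4 \<le> j \<and> j < 10 \<and> f j = 1 \<and> g j = 1} = 2 \<and>
         card {j. 4 \<le> j \<and> j < 10 \<and> f j = 0 \<and> g j = 0} = 4"
proof -
  have sf: "sum f {..<10} = 4" using cf card_bits[of "{..<10}" f] bits by (simp add: Collect_conj_eq lessThan_def Int_commute)
  have sg: "sum g {..<10} = 4" using cg card_bits[of "{..<10}" g] bits by (simp add: Collect_conj_eq lessThan_def Int_commute)
  have e1: "sum g {4..<10} = sum f {4..<10}" using p2 by (intro sum.cong) auto
  have "sum (\<lambda>j. f j + g j) {..<4} = sum (\<lambda>_. 1) {..<4::nat}"
    proof (rule sum.cong[OF refl])
    fix x :: nat assume "x \<in> {..<4}"
    then have "f x \<le> 1" "g x \<le> 1" "f x \<noteq> g x" using p1 bits by auto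
    then show "f x + g x = 1" by (rule bit_ne)
  qed
  then have e2: "sum f {..<4} + sum g {..<4} = 4" by (simp add: sum.distrib)
  have S2: "sum f {4..<10} = 2" and T1: "sum g {..<4} = 2" and S1: "sum f {..<4} = 2"
    using sf sg e1 e2 sums10[of f] sums10[of g] by linarith+
  have c6: "card {j\<in>{4..<10::nat}. f j = 1} + card {j\<in>{4..<10::nat}. f j \<noteq> 1} = 6"
  proof -
    have e: "{p::nat. 4 \<le> p \<and> p < 10} = {4..<10}" by auto
    show ?thesis using card_split[of "{4..<10::nat}" "\<lambda>_. True" "\<lambda>j. f j = 1"] by (simp add: e)
  qed
  have b4: "\<forall>j<4. f j \<le> 1 \<and> g j \<le> 1" using bits by auto
  have "{j. j < 4 \<and> f j = 0 \<and> g j = 1} = {j\<in>{..<4}. g j = 1}"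
    apply (rule Collect_cong) subgoal for x using p1[rule_format, of x] b4[rule_format, of x] by auto done
  moreover have "{j. j < 4 \<and> f j = 1 \<and> g j = 0} = {j\<in>{..<4}. f j = 1}"
    apply (rule Collect_cong) subgoal for x using p1[rule_format, of x] b4[rule_format, of x] by auto done
  moreover have "{j. 4 \<le> j \<and> j < 10 \<and> f j = 1 \<and> g j = 1} = {j\<in>{4..<10}. f j = 1}"
    using p2 by auto
  moreover have "{j. 4 \<le> j \<and> j < 10 \<and> f j = 0 \<and> g j = 0} = {j\<in>{4..<10}. f j \<noteq> 1}"
    using p2 bits by (auto simp: le_Suc_eq)
  ultimately show ?thesis using S1 S2 T1 c6 card_bits[of "{4..<10}" f] card_bits[of "{..<4}" g]
      card_bits[of "{..<4}" f] bits by auto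
qed



lemma netD_unique: "is_net k n P Pi \<Longrightarrow> p \<in> P \<Longrightarrow> t < k \<Longrightarrow> \<exists>!L. L \<in> Pi t \<and> p \<in> L"
  unfolding is_net_def by (elim conjE) (drule bspec, assumption, erule allE, erule impE, assumption, assumption)
lemma netD_card1:
  assumes N: "is_net k n P Pi" and "t < k" "u < k" "t \<noteq> u" "L \<in> Pi t" "M \<in> Pi u"
  shows "card (L \<inter> M) = 1"
proof -
  have H: "\<forall>t<k. \<forall>u<k. t \<noteq> u \<longrightarrow> (\<forall>L\<in>Pi t. \<forall>M\<in>Pi u. card (L \<inter> M) = 1)"
    using N unfolding is_net_def by (elim conjE)
  show ?thesis using H assms by blast
qed
lemma netD_line: "is_net k n P Pi \<Longrightarrow> t < k \<Longrightarrow> L \<in> Pi t \<Longrightarrow> L \<subseteq> P \<and> card L = n"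
  unfolding is_net_def by (elim conjE) (erule allE[of _ t], erule impE, assumption, (elim conjE), erule bspec, assumption)
lemma netD_fin: "is_net k n P Pi \<Longrightarrow> finite P"
  unfolding is_net_def by (elim conjE)
lemma netD_cardPi: "is_net k n P Pi \<Longrightarrow> t < k \<Longrightarrow> card (Pi t) = n"
  unfolding is_net_def by (elim conjE) (erule allE[of _ t], erule impE, assumption, (elim conjE))



lemma net_line_the:
  assumes N: "is_net k n P Pi" and t: "t < k" and L: "L \<in> Pi t" and p: "p \<in> L"
  shows "(THE M. M \<in> Pi t \<and> p \<in> M) = L"
proof -
  have "p \<in> P" using netD_line[OF N t L] p by blast
  then have u: "\<exists>!M. M \<in> Pi t \<and> p \<in> M" using netD_unique[OF N _ t] by blast
  show ?thesis by (rule the1_equality[OF u]) (use L p in blast)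
qed

lemma net_the_in:
  assumes N: "is_net k n P Pi" and t: "t < k" and p: "p \<in> P"
  shows "(THE M. M \<in> Pi t \<and> p \<in> M) \<in> Pi t \<and> p \<in> (THE M. M \<in> Pi t \<and> p \<in> M)"
proof -
  have "\<exists>!M. M \<in> Pi t \<and> p \<in> M" using netD_unique[OF N p t] .
  then show ?thesis by (rule theI')
qed

lemma net_meet:
  assumes N: "is_net k n P Pi" and "t < k" "u < k" "t \<noteq> u" "L \<in> Pi t" "M \<in> Pi u"
    and "p \<in> L" "p \<in> M" "q \<in> L" "q \<in> M"
  shows "p = q"
proof -
  have "card (L \<inter> M) = 1" using netD_card1[OF N assms(2-6)] .
  then obtain x where "L \<inter> M = {x}" by (rule card_1_singletonE)
  then show ?thesis using assms(7-10) by (metis IntI singletonD)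
qed

lemma net_line_sub:
  assumes N: "is_net k n P Pi" and "t < k" "L \<in> Pi t"
  shows "L \<subseteq> P" "card L = n" "finite L"
proof -
  show "L \<subseteq> P" "card L = n" using netD_line[OF N assms(2,3)] by blast+
  have "finite P" using netD_fin[OF N] .
  then show "finite L" using \<open>L \<subseteq> P\<close> finite_subset by blast
qed

lemma net_transversal:
  assumes N: "is_net k n P Pi" and a: "a < k" and t: "t < k" and at: "a \<noteq> t"
    and lab: "bij_betw lab (Pi a) {..<n}" and L: "L \<in> Pi t"
  shows "bij_betw (\<lambda>p. lab (THE M. M \<in> Pi a \<and> p \<in> M)) L {..<n}"
proof -
  define g where "g = (\<lambda>p. THE M. M \<in> Pi a \<and> p \<in> M)"
  have LP: "L \<subseteq> P" "card L = n" "finite L" using net_line_sub[OF N t L] by auto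
  have gin: "g p \<in> Pi a \<and> p \<in> g p" if "p \<in> L" for p
    unfolding g_def using net_the_in[OF N a] that LP(1) by blast
  have inj: "inj_on (\<lambda>p. lab (g p)) L"
  proof (rule inj_onI)
    fix p q assume p: "p \<in> L" and q: "q \<in> L" and e: "lab (g p) = lab (g q)"
    have "g p = g q"
      by (rule inj_onD[OF bij_betw_imp_inj_on[OF lab] e]) (use gin p q in blast)+
    then have "g p \<in> Pi a" "p \<in> g p" "q \<in> g p" using gin p q by auto
    then show "p = q" using net_meet[OF N a t at _ L, of "g p" p q] p q by blast
  qed
  have sub: "(\<lambda>p. lab (g p)) ` L \<subseteq> {..<n}"
  proof
    fix x assume "x \<in> (\<lambda>p. lab (g p)) ` L"
    then obtain p where p: "p \<in> L" and x: "x = lab (g p)" by blast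
    show "x \<in> {..<n}" unfolding x by (rule bij_betw_apply[OF lab]) (use gin p in blast)
  qed
  have "card ((\<lambda>p. lab (g p)) ` L) = n" using card_image[OF inj] LP(2) by simp
  then have "(\<lambda>p. lab (g p)) ` L = {..<n}" using sub by (intro card_subset_eq) auto
  then show ?thesis using inj unfolding bij_betw_def g_def by blast
qed

lemma bij_count:
  assumes "bij_betw h L {..<n}"
  shows "card {p\<in>L. Q (h p)} = card {i. i < n \<and> Q i}"
proof -
  have inj: "inj_on h {p\<in>L. Q (h p)}"
    by (rule inj_on_subset[OF bij_betw_imp_inj_on[OF assms]]) blast
  have im: "h ` L = {..<n}" using bij_betw_imp_surj_on[OF assms] .
  have "h ` {p\<in>L. Q (h p)} = {i. i < n \<and> Q i}"
  proof
    show "h ` {p\<in>L. Q (h p)} \<subseteq> {i. i < n \<and> Q i}" using im by blast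
    show "{i. i < n \<and> Q i} \<subseteq> h ` {p\<in>L. Q (h p)}"
    proof
      fix i assume i: "i \<in> {i. i < n \<and> Q i}"
      then have "i \<in> h ` L" using im by blast
      then obtain p where "p \<in> L" "i = h p" by blast
      then show "i \<in> h ` {p\<in>L. Q (h p)}" using i by blast
    qed
  qed
  then show ?thesis using card_image[OF inj] by simp
qed

lemma net_count_lines:
  assumes N: "is_net k n P Pi" and a: "a < k" and u: "u < k" and au: "a \<noteq> u"
    and A: "A \<in> Pi a"
    and const: "\<forall>M\<in>Pi u. \<forall>p\<in>M. \<forall>q\<in>M. \<Phi> p = \<Phi> q"
  shows "card {p\<in>A. \<Phi> p} = card {M\<in>Pi u. \<exists>q\<in>M. \<Phi> q}"
proof -
  define g where "g = (\<lambda>p. THE M. M \<in> Pi u \<and> p \<in> M)"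
  have AP: "A \<subseteq> P" using net_line_sub[OF N a A] by auto
  have gin: "g p \<in> Pi u \<and> p \<in> g p" if "p \<in> A" for p
    unfolding g_def using net_the_in[OF N u] that AP by blast
  have inj: "inj_on g {p\<in>A. \<Phi> p}"
  proof (rule inj_onI)
    fix p q assume p: "p \<in> {p\<in>A. \<Phi> p}" and q: "q \<in> {p\<in>A. \<Phi> p}" and e: "g p = g q"
    have "p \<in> A" "q \<in> A" using p q by auto
    then show "p = q" using net_meet[OF N a u au A, of "g p" p q] gin e by metis
  qed
  have "g ` {p\<in>A. \<Phi> p} = {M\<in>Pi u. \<exists>q\<in>M. \<Phi> q}"
  proof
    show "g ` {p\<in>A. \<Phi> p} \<subseteq> {M\<in>Pi u. \<exists>q\<in>M. \<Phi> q}"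
    proof
      fix M assume "M \<in> g ` {p\<in>A. \<Phi> p}"
      then obtain p where p: "p \<in> A" "\<Phi> p" and M: "M = g p" by blast
      show "M \<in> {M\<in>Pi u. \<exists>q\<in>M. \<Phi> q}" using M p gin[OF p(1)] by blast
    qed
    show "{M\<in>Pi u. \<exists>q\<in>M. \<Phi> q} \<subseteq> g ` {p\<in>A. \<Phi> p}"
    proof
      fix M assume "M \<in> {M\<in>Pi u. \<exists>q\<in>M. \<Phi> q}"
      then obtain q where M: "M \<in> Pi u" and q: "q \<in> M" "\<Phi> q" by blast
      have "card (A \<inter> M) = 1" using netD_card1[OF N a u au A M] .
      then obtain x where x: "A \<inter> M = {x}" by (rule card_1_singletonE)
      then have xA: "x \<in> A" and xM: "x \<in> M" by auto
      have "\<Phi> x" using const M q xM by blast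
      moreover have "g x = M" unfolding g_def using net_line_the[OF N u M xM] .
      ultimately show "M \<in> g ` {p\<in>A. \<Phi> p}" using xA by force
    qed
  qed
  then show ?thesis using card_image[OF inj] unfolding g_def by simp
qed




lemma card_lt4: "card {i::nat. i < 10 \<and> i < 4} = 4"
proof -
  have "{i::nat. i < 10 \<and> i < 4} = {..<4}" by auto
  then show ?thesis by simp
qed

lemma card_ge4: "card {i::nat. i < 10 \<and> 4 \<le> i} = 6"
proof -
  have "{i::nat. i < 10 \<and> 4 \<le> i} = {4..<10}" by auto
  then show ?thesis by simp
qed

lemma part3:
  fixes F G :: "nat \<Rightarrow> nat \<Rightarrow> nat"
  assumes N: "is_net 4 10 P Pi"
    and rowb: "bij_betw row (Pi 0) {..<10}" and colb: "bij_betw col (Pi 1) {..<10}"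
    and t: "t \<in> {2,3}" and u: "u \<in> {2,3::nat}" and tu: "t \<noteq> u"
    and L: "L \<in> Pi t" and allF: "\<forall>p\<in>L. case_prod F (cell_of Pi row col p) = 1"
    and constG: "\<forall>M\<in>Pi u. \<forall>p\<in>M. \<forall>q\<in>M. case_prod G (cell_of Pi row col p) = case_prod G (cell_of Pi row col q)"
    and Grow: "\<forall>i<10. card {j. j < 10 \<and> G i j = 1} = 4"
    and par: "\<forall>i<10. \<forall>j<10. F i j = 1 \<longrightarrow> (G i j = 1 \<longleftrightarrow> ((i < 4) = (j < 4)))"
  shows "card {p\<in>L. fst (cell_of Pi row col p) < 4 \<and> snd (cell_of Pi row col p) < 4} = 1 \<and>
        card {p\<in>L. fst (cell_of Pi row col p) < 4 \<and> 4 \<le> snd (cell_of Pi row col p)} = 3 \<and>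
        card {p\<in>L. 4 \<le> fst (cell_of Pi row col p) \<and> snd (cell_of Pi row col p) < 4} = 3 \<and>
        card {p\<in>L. 4 \<le> fst (cell_of Pi row col p) \<and> 4 \<le> snd (cell_of Pi row col p)} = 3"
proof -
  define c where "c = cell_of Pi row col"
  have t4: "t < 4" "t \<noteq> 0" "t \<noteq> 1" and u4: "u < 4" "u \<noteq> 0" using t u by auto
  have finL: "finite L" using net_line_sub[OF N t4(1) L] by blast
  have fstc: "(\<lambda>p. fst (c p)) = (\<lambda>p. row (THE M. M \<in> Pi 0 \<and> p \<in> M))"
    unfolding c_def cell_of_def by simp
  have sndc: "(\<lambda>p. snd (c p)) = (\<lambda>p. col (THE M. M \<in> Pi 1 \<and> p \<in> M))"
    unfolding c_def cell_of_def by simp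
  have hr: "bij_betw (\<lambda>p. fst (c p)) L {..<10}"
    unfolding fstc by (rule net_transversal[OF N _ t4(1) _ rowb L]) (use t4 in auto)
  have hc: "bij_betw (\<lambda>p. snd (c p)) L {..<10}"
    unfolding sndc by (rule net_transversal[OF N _ t4(1) _ colb L]) (use t4 in auto)
  define \<Phi> where "\<Phi> = (\<lambda>p. case_prod G (c p) = 1)"
  have c1: "card {p\<in>L. fst (c p) < 4} = 4"
    using bij_count[OF hr, of "\<lambda>i. i < 4"] card_lt4 by simp
  have c2: "card {p\<in>L. 4 \<le> fst (c p)} = 6"
    using bij_count[OF hr, of "\<lambda>i. 4 \<le> i"] card_ge4 by simp
  have c3: "card {p\<in>L. snd (c p) < 4} = 4"
    using bij_count[OF hr, of "\<lambda>i. i < 4"] bij_count[OF hc, of "\<lambda>i. i < 4"] card_lt4 by simp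
  have "card (Pi 0) = 10" using netD_cardPi[OF N, of 0] by simp
  then obtain R0 where R0: "R0 \<in> Pi 0" by (metis card.empty ex_in_conv zero_neq_numeral)
  have constPhi: "\<forall>M\<in>Pi u. \<forall>p\<in>M. \<forall>q\<in>M. \<Phi> p = \<Phi> q"
    using constG unfolding \<Phi>_def c_def by metis
  have e1: "card {p\<in>L. \<Phi> p} = card {M\<in>Pi u. \<exists>q\<in>M. \<Phi> q}"
    by (rule net_count_lines[OF N t4(1) u4(1) tu L constPhi])
  have e2: "card {p\<in>R0. \<Phi> p} = card {M\<in>Pi u. \<exists>q\<in>M. \<Phi> q}"
    by (rule net_count_lines[OF N _ u4(1) _ R0 constPhi]) (use u4 in auto)
  define r where "r = row R0"
  have r10: "r < 10" unfolding r_def using bij_betw_apply[OF rowb R0] by simp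
  have hc0: "bij_betw (\<lambda>p. snd (c p)) R0 {..<10}"
    unfolding sndc by (rule net_transversal[OF N _ _ _ colb R0]) auto
  have fstR0: "fst (c p) = r" if "p \<in> R0" for p
    unfolding c_def cell_of_def r_def using net_line_the[OF N _ R0 that] by simp
  have "{p\<in>R0. \<Phi> p} = {p\<in>R0. G r (snd (c p)) = 1}"
  proof (rule Collect_cong)
    fix p show "(p \<in> R0 \<and> \<Phi> p) = (p \<in> R0 \<and> G r (snd (c p)) = 1)"
      unfolding \<Phi>_def using fstR0[of p] by (cases "c p") auto
  qed
  then have "card {p\<in>R0. \<Phi> p} = 4"
    using bij_count[OF hc0, of "\<lambda>j. G r j = 1"] Grow r10 by simp
  then have cG: "card {p\<in>L. \<Phi> p} = 4" using e1 e2 by simp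
  have PhiL: "\<Phi> p = ((fst (c p) < 4) = (snd (c p) < 4))" if p: "p \<in> L" for p
  proof -
    have i: "fst (c p) < 10" using bij_betw_apply[OF hr p] by simp
    have j: "snd (c p) < 10" using bij_betw_apply[OF hc p] by simp
    have f: "F (fst (c p)) (snd (c p)) = 1" using allF p unfolding c_def by (cases "cell_of Pi row col p") auto
    show ?thesis using par i j f unfolding \<Phi>_def by (cases "c p") auto
  qed
  let ?S1 = "{p\<in>L. fst (c p) < 4 \<and> snd (c p) < 4}"
  let ?S2 = "{p\<in>L. fst (c p) < 4 \<and> 4 \<le> snd (c p)}"
  let ?S3 = "{p\<in>L. 4 \<le> fst (c p) \<and> snd (c p) < 4}"
  let ?S4 = "{p\<in>L. 4 \<le> fst (c p) \<and> 4 \<le> snd (c p)}"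
  have s12: "card {p\<in>L. fst (c p) < 4} = card ?S1 + card ?S2"
    using card_split[OF finL, of "\<lambda>p. fst (c p) < 4" "\<lambda>p. snd (c p) < 4"] by (simp add: not_less)
  have s34: "card {p\<in>L. 4 \<le> fst (c p)} = card ?S3 + card ?S4"
    using card_split[OF finL, of "\<lambda>p. 4 \<le> fst (c p)" "\<lambda>p. snd (c p) < 4"] by (simp add: not_less)
  have s13: "card {p\<in>L. snd (c p) < 4} = card ?S1 + card ?S3"
  proof -
    have a: "{p\<in>L. snd (c p) < 4 \<and> fst (c p) < 4} = ?S1" by auto
    have b: "{p\<in>L. snd (c p) < 4 \<and> \<not> fst (c p) < 4} = ?S3" by auto
    show ?thesis using card_split[OF finL, of "\<lambda>p. snd (c p) < 4" "\<lambda>p. fst (c p) < 4"] a b by simp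
  qed
  have s14: "card {p\<in>L. \<Phi> p} = card ?S1 + card ?S4"
  proof -
    have a: "{p\<in>L. \<Phi> p \<and> fst (c p) < 4} = ?S1" using PhiL by auto
    have b: "{p\<in>L. \<Phi> p \<and> \<not> fst (c p) < 4} = ?S4" using PhiL by auto
    show ?thesis using card_split[OF finL, of "\<Phi>" "\<lambda>p. fst (c p) < 4"] a b by simp
  qed
  have "card ?S1 = 1 \<and> card ?S2 = 3 \<and> card ?S3 = 3 \<and> card ?S4 = 3"
    using c1 c2 c3 cG s12 s34 s13 s14 by linarith
  then show ?thesis unfolding c_def .
qed




lemma parity_bits:
  fixes a b x y :: nat
  assumes "a \<le> 1" "b \<le> 1" "(x + y + (a + b)) mod 2 = 0" "x \<le> 1" "y \<le> 1"
  shows "(a = b) = (x = y)"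
  using assms by (auto simp: le_Suc_eq)

lemma main_extract:
  fixes F0 F1 :: "nat \<Rightarrow> nat \<Rightarrow> nat"
  assumes T: "template 10 [4,4,4,4] [F0, F1]"
  shows "freq_square 10 4 F0" "freq_square 10 4 F1"
    "\<forall>i<10. \<forall>j<10. (F0 i j = F1 i j) = ((i < 4) = (j < 4))"
proof -
  have A: "\<forall>t<length [F0,F1]. freq_square 10 ([4,4,4,4::nat] ! (t + 2)) ([F0, F1] ! t)"
    using T unfolding template_def by (elim conjE)
  show f0: "freq_square 10 4 F0" using A[rule_format, of 0] by simp
  show f1: "freq_square 10 4 F1" using A[rule_format, of 1] by simp
  have W: "\<forall>i<10. \<forall>j<10. cell_weight [4,4,4,4] [F0,F1] i j mod 2 = (sum_list [4,4,4,4::nat] div 2) mod 2"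
    using T unfolding template_def by (elim conjE)
  show "\<forall>i<10. \<forall>j<10. (F0 i j = F1 i j) = ((i < 4) = (j < 4))"
  proof (intro allI impI)
    fix i j :: nat assume i: "i < 10" and j: "j < 10"
    have h0: "\<forall>i<10. \<forall>j<10. F0 i j \<in> {0,1}" using f0 unfolding freq_square_def by (elim conjE)
    have h1: "\<forall>i<10. \<forall>j<10. F1 i j \<in> {0,1}" using f1 unfolding freq_square_def by (elim conjE)
    have b0: "F0 i j \<le> 1" using h0[rule_format, OF i j] by auto
    have b1: "F1 i j \<le> 1" using h1[rule_format, OF i j] by auto
    have w: "((if i < 4 then 1 else 0) + (if j < 4 then 1 else 0) + (F0 i j + F1 i j)) mod 2 = (0::nat)"
    proof -
      have w0: "cell_weight [4,4,4,4] [F0,F1] i j mod 2 = 0" using W[rule_format, OF i j] by simp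
      have cw: "cell_weight [4,4,4,4] [F0,F1] i j = (if i < 4 then 1 else 0) + (if j < 4 then 1 else 0) + (F0 i j + F1 i j)"
        by (simp add: cell_weight_def cell_type_def)
      show ?thesis using w0 unfolding cw .
    qed
    show "(F0 i j = F1 i j) = ((i < 4) = (j < 4))"
      using parity_bits[OF b0 b1 w] by auto
  qed
qed

theorem mainTheorem4:
  fixes P :: "'p set" and Pi :: "nat \<Rightarrow> 'p set set"
    and F0 F1 :: "nat \<Rightarrow> nat \<Rightarrow> nat" and row col :: "'p set \<Rightarrow> nat"
  assumes T: "template 10 [4,4,4,4] [F0, F1]"
    and N: "is_net 4 10 P Pi"
    and R: "refinement_via 10 [4,4,4,4] [F0, F1] P Pi row col"
  shows
    \<comment> \<open>(i)\<close>
    "card {(i, j). i < 4 \<and> j < 4 \<and> F0 i j = 1 \<and> F1 i j = 1} = 4 \<and>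
     (\<forall>i j i' j'. i < 4 \<and> j < 4 \<and> F0 i j = 1 \<and> F1 i j = 1 \<and>
        i' < 4 \<and> j' < 4 \<and> F0 i' j' = 1 \<and> F1 i' j' = 1 \<and> (i, j) \<noteq> (i', j')
        \<longrightarrow> i \<noteq> i' \<and> j \<noteq> j')
     \<and>
     \<comment> \<open>(ii)\<close>
     (\<forall>i<4. card {j. 4 \<le> j \<and> j < 10 \<and> F0 i j = 1 \<and> F1 i j = 0} = 3 \<and>
            card {j. 4 \<le> j \<and> j < 10 \<and> F0 i j = 0 \<and> F1 i j = 1} = 3) \<and>
     (\<forall>j<4. card {i. 4 \<le> i \<and> i < 10 \<and> F0 i j = 1 \<and> F1 i j = 0} = 3 \<and>
            card {i. 4 \<le> i \<and> i < 10 \<and> F0 i j = 0 \<and> F1 i j = 1} = 3)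
     \<and>
     \<comment> \<open>(iii)\<close>
     (\<forall>t\<in>{2, 3}. \<forall>L\<in>Pi t. (\<forall>p\<in>L. case_prod ([F0, F1] ! (t - 2)) (cell_of Pi row col p) = 1) \<longrightarrow>
        card {p\<in>L. fst (cell_of Pi row col p) < 4 \<and> snd (cell_of Pi row col p) < 4} = 1 \<and>
        card {p\<in>L. fst (cell_of Pi row col p) < 4 \<and> 4 \<le> snd (cell_of Pi row col p)} = 3 \<and>
        card {p\<in>L. 4 \<le> fst (cell_of Pi row col p) \<and> snd (cell_of Pi row col p) < 4} = 3 \<and>
        card {p\<in>L. 4 \<le> fst (cell_of Pi row col p) \<and> 4 \<le> snd (cell_of Pi row col p)} = 3)
     \<and>
     \<comment> \<open>(iv)\<close>
     (\<forall>j. 4 \<le> j \<and> j < 10 \<longrightarrow>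
        card {i. i < 4 \<and> F0 i j = 0 \<and> F1 i j = 1} = 2 \<and>
        card {i. i < 4 \<and> F0 i j = 1 \<and> F1 i j = 0} = 2) \<and>
     (\<forall>i. 4 \<le> i \<and> i < 10 \<longrightarrow>
        card {j. j < 4 \<and> F0 i j = 0 \<and> F1 i j = 1} = 2 \<and>
        card {j. j < 4 \<and> F0 i j = 1 \<and> F1 i j = 0} = 2) \<and>
     (\<forall>i. 4 \<le> i \<and> i < 10 \<longrightarrow>
        card {j. 4 \<le> j \<and> j < 10 \<and> F0 i j = 1 \<and> F1 i j = 1} = 2 \<and>
        card {j. 4 \<le> j \<and> j < 10 \<and> F0 i j = 0 \<and> F1 i j = 0} = 4) \<and>
     (\<forall>j. 4 \<le> j \<and> j < 10 \<longrightarrow>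
        card {i. 4 \<le> i \<and> i < 10 \<and> F0 i j = 1 \<and> F1 i j = 1} = 2 \<and>
        card {i. 4 \<le> i \<and> i < 10 \<and> F0 i j = 0 \<and> F1 i j = 0} = 4)"
proof -
  have f0: "freq_square 10 4 F0" and f1: "freq_square 10 4 F1"
    and par: "\<forall>i<10. \<forall>j<10. (F0 i j = F1 i j) = ((i < 4) = (j < 4))"
    using main_extract[OF T] by auto
  have h0: "\<forall>i<10. \<forall>j<10. F0 i j \<in> {0,1}" using f0 unfolding freq_square_def by (elim conjE)
  have h1: "\<forall>i<10. \<forall>j<10. F1 i j \<in> {0,1}" using f1 unfolding freq_square_def by (elim conjE)
  have bits: "\<forall>i<10. \<forall>j<10. F0 i j \<le> 1 \<and> F1 i j \<le> 1"
  proof (intro allI impI)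
    fix i j :: nat assume i: "i < 10" and j: "j < 10"
    show "F0 i j \<le> 1 \<and> F1 i j \<le> 1" using h0[rule_format, OF i j] h1[rule_format, OF i j] by auto
  qed
  have r0: "\<forall>i<10. card {j. j < 10 \<and> F0 i j = 1} = 4" and c0: "\<forall>j<10. card {i. i < 10 \<and> F0 i j = 1} = 4"
    using f0 unfolding freq_square_def by auto
  have r1: "\<forall>i<10. card {j. j < 10 \<and> F1 i j = 1} = 4" and c1: "\<forall>j<10. card {i. i < 10 \<and> F1 i j = 1} = 4"
    using f1 unfolding freq_square_def by auto
  have rowA: "card {j. 4 \<le> j \<and> j < 10 \<and> F0 i j = 1 \<and> F1 i j = 0} = 3 \<and>
         card {j. 4 \<le> j \<and> j < 10 \<and> F0 i j = 0 \<and> F1 i j = 1} = 3 \<and>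
         card {j. j < 4 \<and> F0 i j = 1 \<and> F1 i j = 1} = 1" if i: "i < 4" for i
    by (rule typeA) (use i bits r0 r1 par in auto)
  have colA: "card {i. 4 \<le> i \<and> i < 10 \<and> F0 i j = 1 \<and> F1 i j = 0} = 3 \<and>
         card {i. 4 \<le> i \<and> i < 10 \<and> F0 i j = 0 \<and> F1 i j = 1} = 3 \<and>
         card {i. i < 4 \<and> F0 i j = 1 \<and> F1 i j = 1} = 1" if j: "j < 4" for j
    by (rule typeA[where f = "\<lambda>i. F0 i j" and g = "\<lambda>i. F1 i j"]) (use j bits c0 c1 par in auto)
  have colB: "card {i. i < 4 \<and> F0 i j = 0 \<and> F1 i j = 1} = 2 \<and>
         card {i. i < 4 \<and> F0 i j = 1 \<and> F1 i j = 0} = 2 \<and>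
         card {i. 4 \<le> i \<and> i < 10 \<and> F0 i j = 1 \<and> F1 i j = 1} = 2 \<and>
         card {i. 4 \<le> i \<and> i < 10 \<and> F0 i j = 0 \<and> F1 i j = 0} = 4" if j: "4 \<le> j" "j < 10" for j
    by (rule typeB[where f = "\<lambda>i. F0 i j" and g = "\<lambda>i. F1 i j"]) (use j bits c0 c1 par in auto)
  have rowB: "card {j. j < 4 \<and> F0 i j = 0 \<and> F1 i j = 1} = 2 \<and>
         card {j. j < 4 \<and> F0 i j = 1 \<and> F1 i j = 0} = 2 \<and>
         card {j. 4 \<le> j \<and> j < 10 \<and> F0 i j = 1 \<and> F1 i j = 1} = 2 \<and>
         card {j. 4 \<le> j \<and> j < 10 \<and> F0 i j = 0 \<and> F1 i j = 0} = 4" if i: "4 \<le> i" "i < 10" for i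
    by (rule typeB) (use i bits r0 r1 par in auto)
  have I1: "card {(i, j). i < 4 \<and> j < 4 \<and> F0 i j = 1 \<and> F1 i j = 1} = 4"
  proof -
    have "{(i, j). i < 4 \<and> j < 4 \<and> F0 i j = 1 \<and> F1 i j = 1} =
          Sigma {..<4} (\<lambda>i. {j. j < 4 \<and> F0 i j = 1 \<and> F1 i j = 1})" by auto
    moreover have "card (Sigma {..<4::nat} (\<lambda>i. {j. j < 4 \<and> F0 i j = 1 \<and> F1 i j = 1})) = (\<Sum>i<4::nat. 1)"
    proof -
      have "(\<Sum>i<4::nat. card {j. j < 4 \<and> F0 i j = 1 \<and> F1 i j = 1}) = (\<Sum>i<4::nat. 1)"
      proof (rule sum.cong[OF refl])
        fix i :: nat assume "i \<in> {..<4}"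
        then show "card {j. j < 4 \<and> F0 i j = 1 \<and> F1 i j = 1} = 1" using rowA[of i] by simp
      qed
      moreover have "\<forall>i\<in>{..<4::nat}. finite {j. j < 4 \<and> F0 i j = 1 \<and> F1 i j = 1}" by simp
      ultimately show ?thesis using card_SigmaI[of "{..<4::nat}" "\<lambda>i. {j. j < 4 \<and> F0 i j = 1 \<and> F1 i j = 1}"] by simp
    qed
    ultimately show ?thesis by simp
  qed
  have one: "x = y" if "card S = 1" "x \<in> S" "y \<in> S" for S :: "nat set" and x y
    using that by (metis card_1_singletonE singletonD)
  have I2: "\<forall>i j i' j'. i < 4 \<and> j < 4 \<and> F0 i j = 1 \<and> F1 i j = 1 \<and>
        i' < 4 \<and> j' < 4 \<and> F0 i' j' = 1 \<and> F1 i' j' = 1 \<and> (i, j) \<noteq> (i', j')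
        \<longrightarrow> i \<noteq> i' \<and> j \<noteq> j'"
  proof (intro allI impI)
    fix i j i' j' assume H: "i < 4 \<and> j < 4 \<and> F0 i j = 1 \<and> F1 i j = 1 \<and>
        i' < 4 \<and> j' < 4 \<and> F0 i' j' = 1 \<and> F1 i' j' = 1 \<and> (i, j) \<noteq> (i', j')"
    have "i \<noteq> i'"
    proof
      assume "i = i'"
      then have "j = j'" using one[OF conjunct2[OF conjunct2[OF rowA]], of i j j'] H by auto
      then show False using H \<open>i = i'\<close> by auto
    qed
    moreover have "j \<noteq> j'"
    proof
      assume "j = j'"
      then have "i = i'" using one[OF conjunct2[OF conjunct2[OF colA]], of j i i'] H by auto
      then show False using H \<open>j = j'\<close> by auto
    qed
    ultimately show "i \<noteq> i' \<and> j \<noteq> j'" by simp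
  qed
  have Rall: "bij_betw row (Pi 0) {..<10} \<and> bij_betw col (Pi 1) {..<10} \<and>
     (\<forall>t. 2 \<le> t \<and> t < length [4,4,4,4::nat] \<longrightarrow>
        (\<forall>L\<in>Pi t. \<forall>p\<in>L. \<forall>q\<in>L.
           case_prod ([F0,F1] ! (t - 2)) (cell_of Pi row col p) = case_prod ([F0,F1] ! (t - 2)) (cell_of Pi row col q)))"
    using R unfolding refinement_via_def .
  have rowb: "bij_betw row (Pi 0) {..<10}" using Rall by (rule conjunct1)
  have colb: "bij_betw col (Pi 1) {..<10}" using Rall by (elim conjE)
  have RC: "\<forall>t. 2 \<le> t \<and> t < length [4,4,4,4::nat] \<longrightarrow>
        (\<forall>L\<in>Pi t. \<forall>p\<in>L. \<forall>q\<in>L.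
           case_prod ([F0,F1] ! (t - 2)) (cell_of Pi row col p) = case_prod ([F0,F1] ! (t - 2)) (cell_of Pi row col q))"
    using Rall by (elim conjE)
  have C0: "\<forall>M\<in>Pi 2. \<forall>p\<in>M. \<forall>q\<in>M. case_prod F0 (cell_of Pi row col p) = case_prod F0 (cell_of Pi row col q)"
    proof -
    have pre: "2 \<le> (2::nat) \<and> 2 < length [4,4,4,4::nat]" by simp
    have X: "[F0,F1] ! (2 - 2) = F0" by simp
    from mp[OF spec[OF RC, of 2] pre] show ?thesis unfolding X .
  qed
  have C1: "\<forall>M\<in>Pi 3. \<forall>p\<in>M. \<forall>q\<in>M. case_prod F1 (cell_of Pi row col p) = case_prod F1 (cell_of Pi row col q)"
    proof -
    have pre: "2 \<le> (3::nat) \<and> 3 < length [4,4,4,4::nat]" by simp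
    have X: "[F0,F1] ! (3 - 2) = F1" by simp
    from mp[OF spec[OF RC, of 3] pre] show ?thesis unfolding X .
  qed
  have III: "\<forall>t\<in>{2, 3}. \<forall>L\<in>Pi t. (\<forall>p\<in>L. case_prod ([F0, F1] ! (t - 2)) (cell_of Pi row col p) = 1) \<longrightarrow>
        card {p\<in>L. fst (cell_of Pi row col p) < 4 \<and> snd (cell_of Pi row col p) < 4} = 1 \<and>
        card {p\<in>L. fst (cell_of Pi row col p) < 4 \<and> 4 \<le> snd (cell_of Pi row col p)} = 3 \<and>
        card {p\<in>L. 4 \<le> fst (cell_of Pi row col p) \<and> snd (cell_of Pi row col p) < 4} = 3 \<and>
        card {p\<in>L. 4 \<le> fst (cell_of Pi row col p) \<and> 4 \<le> snd (cell_of Pi row col p)} = 3"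
  proof (intro ballI impI)
    fix t L assume t: "t \<in> {2::nat, 3}" and L: "L \<in> Pi t"
      and allF: "\<forall>p\<in>L. case_prod ([F0, F1] ! (t - 2)) (cell_of Pi row col p) = 1"
    have parA: "\<forall>i<10. \<forall>j<10. F0 i j = 1 \<longrightarrow> (F1 i j = 1 \<longleftrightarrow> ((i < 4) = (j < 4)))"
    proof (intro allI impI)
      fix i j :: nat assume i: "i < 10" and j: "j < 10" and f: "F0 i j = 1"
      show "F1 i j = 1 \<longleftrightarrow> ((i < 4) = (j < 4))" using par[rule_format, OF i j] f by auto
    qed
    have parB: "\<forall>i<10. \<forall>j<10. F1 i j = 1 \<longrightarrow> (F0 i j = 1 \<longleftrightarrow> ((i < 4) = (j < 4)))"
    proof (intro allI impI)
      fix i j :: nat assume i: "i < 10" and j: "j < 10" and f: "F1 i j = 1"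
      show "F0 i j = 1 \<longleftrightarrow> ((i < 4) = (j < 4))" using par[rule_format, OF i j] f by auto
    qed
    show "card {p\<in>L. fst (cell_of Pi row col p) < 4 \<and> snd (cell_of Pi row col p) < 4} = 1 \<and>
        card {p\<in>L. fst (cell_of Pi row col p) < 4 \<and> 4 \<le> snd (cell_of Pi row col p)} = 3 \<and>
        card {p\<in>L. 4 \<le> fst (cell_of Pi row col p) \<and> snd (cell_of Pi row col p) < 4} = 3 \<and>
        card {p\<in>L. 4 \<le> fst (cell_of Pi row col p) \<and> 4 \<le> snd (cell_of Pi row col p)} = 3"
    proof (cases "t = 2")
      case True
      show ?thesis
      proof (rule part3[OF N rowb colb t, of 3 L F0 F1])
        show "3 \<in> {2, 3::nat}" by simp
        show "t \<noteq> 3" using True by simp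
        show "L \<in> Pi t" by (rule L)
        show "\<forall>p\<in>L. case_prod F0 (cell_of Pi row col p) = 1" using allF True by simp
        show "\<forall>M\<in>Pi 3. \<forall>p\<in>M. \<forall>q\<in>M. case_prod F1 (cell_of Pi row col p) = case_prod F1 (cell_of Pi row col q)" by (rule C1)
        show "\<forall>i<10. card {j. j < 10 \<and> F1 i j = 1} = 4" by (rule r1)
        show "\<forall>i<10. \<forall>j<10. F0 i j = 1 \<longrightarrow> (F1 i j = 1 \<longleftrightarrow> ((i < 4) = (j < 4)))" by (rule parA)
      qed
    next
      case False
      then have t3: "t = 3" using t by auto
      show ?thesis
      proof (rule part3[OF N rowb colb t, of 2 L F1 F0])
        show "2 \<in> {2, 3::nat}" by simp
        show "t \<noteq> 2" using t3 by simp
        show "L \<in> Pi t" by (rule L)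
        show "\<forall>p\<in>L. case_prod F1 (cell_of Pi row col p) = 1" using allF t3 by simp
        show "\<forall>M\<in>Pi 2. \<forall>p\<in>M. \<forall>q\<in>M. case_prod F0 (cell_of Pi row col p) = case_prod F0 (cell_of Pi row col q)" by (rule C0)
        show "\<forall>i<10. card {j. j < 10 \<and> F0 i j = 1} = 4" by (rule r0)
        show "\<forall>i<10. \<forall>j<10. F1 i j = 1 \<longrightarrow> (F0 i j = 1 \<longleftrightarrow> ((i < 4) = (j < 4)))" by (rule parB)
      qed
    qed
  qed
  have II1: "\<forall>i<4. card {j. 4 \<le> j \<and> j < 10 \<and> F0 i j = 1 \<and> F1 i j = 0} = 3 \<and>
            card {j. 4 \<le> j \<and> j < 10 \<and> F0 i j = 0 \<and> F1 i j = 1} = 3"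
  proof (intro allI impI)
    fix i :: nat assume "i < 4"
    from rowA[OF this] show "card {j. 4 \<le> j \<and> j < 10 \<and> F0 i j = 1 \<and> F1 i j = 0} = 3 \<and>
            card {j. 4 \<le> j \<and> j < 10 \<and> F0 i j = 0 \<and> F1 i j = 1} = 3" by (elim conjE) (rule conjI)
  qed
  have II2: "\<forall>j<4. card {i. 4 \<le> i \<and> i < 10 \<and> F0 i j = 1 \<and> F1 i j = 0} = 3 \<and>
            card {i. 4 \<le> i \<and> i < 10 \<and> F0 i j = 0 \<and> F1 i j = 1} = 3"
  proof (intro allI impI)
    fix j :: nat assume "j < 4"
    from colA[OF this] show "card {i. 4 \<le> i \<and> i < 10 \<and> F0 i j = 1 \<and> F1 i j = 0} = 3 \<and>
            card {i. 4 \<le> i \<and> i < 10 \<and> F0 i j = 0 \<and> F1 i j = 1} = 3" by (elim conjE) (rule conjI)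
  qed
  have IV1: "\<forall>j. 4 \<le> j \<and> j < 10 \<longrightarrow>
        card {i. i < 4 \<and> F0 i j = 0 \<and> F1 i j = 1} = 2 \<and>
        card {i. i < 4 \<and> F0 i j = 1 \<and> F1 i j = 0} = 2"
  proof (intro allI impI)
    fix j :: nat assume "4 \<le> j \<and> j < 10"
    then have a: "4 \<le> j" "j < 10" by auto
    from colB[OF a] show "card {i. i < 4 \<and> F0 i j = 0 \<and> F1 i j = 1} = 2 \<and>
        card {i. i < 4 \<and> F0 i j = 1 \<and> F1 i j = 0} = 2" by (elim conjE) (rule conjI)
  qed
  have IV2: "\<forall>i. 4 \<le> i \<and> i < 10 \<longrightarrow>
        card {j. j < 4 \<and> F0 i j = 0 \<and> F1 i j = 1} = 2 \<and>
        card {j. j < 4 \<and> F0 i j = 1 \<and> F1 i j = 0} = 2"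
  proof (intro allI impI)
    fix i :: nat assume "4 \<le> i \<and> i < 10"
    then have a: "4 \<le> i" "i < 10" by auto
    from rowB[OF a] show "card {j. j < 4 \<and> F0 i j = 0 \<and> F1 i j = 1} = 2 \<and>
        card {j. j < 4 \<and> F0 i j = 1 \<and> F1 i j = 0} = 2" by (elim conjE) (rule conjI)
  qed
  have IV3: "\<forall>i. 4 \<le> i \<and> i < 10 \<longrightarrow>
        card {j. 4 \<le> j \<and> j < 10 \<and> F0 i j = 1 \<and> F1 i j = 1} = 2 \<and>
        card {j. 4 \<le> j \<and> j < 10 \<and> F0 i j = 0 \<and> F1 i j = 0} = 4"
  proof (intro allI impI)
    fix i :: nat assume "4 \<le> i \<and> i < 10"
    then have a: "4 \<le> i" "i < 10" by auto
    from rowB[OF a] show "card {j. 4 \<le> j \<and> j < 10 \<and> F0 i j = 1 \<and> F1 i j = 1} = 2 \<and>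
        card {j. 4 \<le> j \<and> j < 10 \<and> F0 i j = 0 \<and> F1 i j = 0} = 4" by (elim conjE) (rule conjI)
  qed
  have IV4: "\<forall>j. 4 \<le> j \<and> j < 10 \<longrightarrow>
        card {i. 4 \<le> i \<and> i < 10 \<and> F0 i j = 1 \<and> F1 i j = 1} = 2 \<and>
        card {i. 4 \<le> i \<and> i < 10 \<and> F0 i j = 0 \<and> F1 i j = 0} = 4"
  proof (intro allI impI)
    fix j :: nat assume "4 \<le> j \<and> j < 10"
    then have a: "4 \<le> j" "j < 10" by auto
    from colB[OF a] show "card {i. 4 \<le> i \<and> i < 10 \<and> F0 i j = 1 \<and> F1 i j = 1} = 2 \<and>
        card {i. 4 \<le> i \<and> i < 10 \<and> F0 i j = 0 \<and> F1 i j = 0} = 4" by (elim conjE) (rule conjI)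
  qed
  show ?thesis
    by (intro conjI I1 I2 II1 II2 III IV1 IV2 IV3 IV4)
qed


end
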